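(* Let $N\ge1$, $\psi\in[-\pi,\pi]$, and $(w,a,\theta)\in\widetilde{\mathcal{D}}_N(\psi)$. There exists $\omega_0<0$ such that $M_{\mathrm{e}^{i\omega}}(w,a,\theta)\in\mathcal{D}_N(\psi)$ for every real $\omega$ with $\omega_0\le\omega<0$.
   Context: $P_N=\{1,\dots,N\}$; vectors are functions on $P_N$, $v^{-1}[S]=\{\ell:v_\ell\in S\}$, $\mathrm{Tr}(v,\Lambda):=\sum_{\ell\in\Lambda}v_\ell$. $\mathcal{C}:=\{z:\mathrm{Re}(z)>0\text{ or }z\in i\mathbb{R}_{>0}\}$, $\mathcal{C}^\circ$ the open right half-plane. $\mathbb{D}_N:=\{(w,a,\theta)\in\mathbb{C}\times\mathbb{C}^N\times\mathbb{R}^N:a^{-1}[0]\subseteq\theta^{-1}[\mathbb{R}\smallsetminus\mathbb{Z}]\}$, $\pi(w,a,\theta):=w-\mathrm{Tr}(a,a^{-1}[-\mathcal{C}])$, $M_\beta(w,a,\theta):=(\beta w,\beta a,\theta)$. $\widetilde{\mathcal{D}}_N:=\pi^{-1}[\mathcal{C}]$; $\mathcal{D}_N:=\{(w,a,\theta)\in\mathbb{D}_N:\pi(w,a,\theta)\in\mathcal{C}^\circ,\ a_\ell\notin i\mathbb{R}\smallsetminus\{0\}\ \forall\ell\}$. $\mathcal{D}_N(\psi):=\mathcal{D}_N\cap M_{\mathrm{e}^{i\psi}}^{-1}[\mathcal{D}_N]\cap\bigcap_{0<\mathrm{sgn}(\psi)t<|\psi|}(\pi\circ M_{\mathrm{e}^{it}})^{-1}[\mathcal{C}]$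 (so $\mathcal{D}_N(0)=\mathcal{D}_N$). For $\psi\ne0$, $\widetilde{\mathcal{D}}_N(\psi):=\bigcap_{0\le\mathrm{sgn}(\psi)t\le|\psi|}(\pi\circ M_{\mathrm{e}^{it}})^{-1}[\mathcal{C}]$, and $\widetilde{\mathcal{D}}_N(0):=\widetilde{\mathcal{D}}_N$. *)

theory Defs
  imports Complex_Main
begin

text \<open>Points of the domain are triples (w, a, theta) with w complex,
  a : {1..N} -> complex, theta : {1..N} -> real; vectors are represented as
  functions on nat of which only the values on {1..N} matter.\<close>

type_synonym triple = "complex \<times> (nat \<Rightarrow> complex) \<times> (nat \<Rightarrow> real)"

definition Cset :: "complex set" where
  "Cset = {z. Re z > 0 \<or> (Re z = 0 \<and> Im z > 0)}"

definition Copen :: "complex set" where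
  "Copen = {z. Re z > 0}"

definition preim :: "nat \<Rightarrow> (nat \<Rightarrow> 'b) \<Rightarrow> 'b set \<Rightarrow> nat set" where
  "preim N v S = {l \<in> {1..N}. v l \<in> S}"

definition Tr :: "(nat \<Rightarrow> complex) \<Rightarrow> nat set \<Rightarrow> complex" where
  "Tr v L = (\<Sum>l\<in>L. v l)"

definition DD :: "nat \<Rightarrow> triple set" where
  "DD N = {(w, a, \<theta>). preim N a {0} \<subseteq> preim N \<theta> (UNIV - \<int>)}"

definition piN :: "nat \<Rightarrow> triple \<Rightarrow> complex" where
  "piN N x = (case x of (w, a, \<theta>) \<Rightarrow> w - Tr a (preim N a (uminus ` Cset)))"

definition Mb :: "complex \<Rightarrow> triple \<Rightarrow> triple" where
  "Mb \<beta> x = (case x of (w, a, \<theta>) \<Rightarrow> (\<beta> * w, (\<lambda>l. \<beta> * a l), \<theta>))"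

definition Dt :: "nat \<Rightarrow> triple set" where
  "Dt N = {x \<in> DD N. piN N x \<in> Cset}"

definition D :: "nat \<Rightarrow> triple set" where
  "D N = {x \<in> DD N. piN N x \<in> Copen \<and>
      (\<forall>l\<in>{1..N}. fst (snd x) l \<notin> {z. Re z = 0} - {0})}"

definition Dpsi :: "nat \<Rightarrow> real \<Rightarrow> triple set" where
  "Dpsi N \<psi> = D N \<inter> {x \<in> DD N. Mb (exp (\<i> * of_real \<psi>)) x \<in> D N}
     \<inter> {x \<in> DD N. \<forall>t::real. 0 < sgn \<psi> * t \<and> sgn \<psi> * t < \<bar>\<psi>\<bar> \<longrightarrow>
            piN N (Mb (exp (\<i> * of_real t)) x) \<in> Cset}"

definition Dtpsi :: "nat \<Rightarrow> real \<Rightarrow> triple set" where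
  "Dtpsi N \<psi> = (if \<psi> = 0 then Dt N else
     {x \<in> DD N. \<forall>t::real. 0 \<le> sgn \<psi> * t \<and> sgn \<psi> * t \<le> \<bar>\<psi>\<bar> \<longrightarrow>
            piN N (Mb (exp (\<i> * of_real t)) x) \<in> Cset})"

end

theory Submission
  imports Defs
begin

lemma ev_sin: "eventually (\<lambda>w::real. sin w < 0) (at_left 0)"
proof -
  have "eventually (\<lambda>w::real. w \<in> {-pi<..<0}) (at_left 0)"
    by (rule eventually_at_left_real) simp
  then show ?thesis
  proof eventually_elim
    case (elim w)
    then have "0 < sin (-w)" by (intro sin_gt_zero) auto
    then show ?case by simp
  qed
qed

lemma tend_Re: "((\<lambda>w::real. Re (cis w * z)) \<longlongrightarrow> Re z) (at_left 0)"
proof -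
  have "((\<lambda>w::real. cos w * Re z - sin w * Im z) \<longlongrightarrow> cos 0 * Re z - sin 0 * Im z) (at_left 0)"
    by (intro tendsto_intros)
  then show ?thesis by simp
qed

lemma ev_pos: "Re z > 0 \<Longrightarrow> eventually (\<lambda>w::real. Re (cis w * z) > 0) (at_left 0)"
  using order_tendstoD(1)[OF tend_Re] by blast

lemma ev_neg: "Re z < 0 \<Longrightarrow> eventually (\<lambda>w::real. Re (cis w * z) < 0) (at_left 0)"
  using order_tendstoD(2)[OF tend_Re] by blast

lemma ev_imag_pos: "Re z = 0 \<Longrightarrow> Im z > 0 \<Longrightarrow> eventually (\<lambda>w::real. Re (cis w * z) > 0) (at_left 0)"
  using ev_sin by eventually_elim (simp add: mult_neg_pos)

lemma ev_imag_neg: "Re z = 0 \<Longrightarrow> Im z < 0 \<Longrightarrow> eventually (\<lambda>w::real. Re (cis w * z) < 0) (at_left 0)"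
  using ev_sin by eventually_elim (simp add: mult_neg_neg)

lemma mC_iff: "z \<in> uminus ` Cset \<longleftrightarrow> Re z < 0 \<or> (Re z = 0 \<and> Im z < 0)"
proof
  assume "z \<in> uminus ` Cset" then show "Re z < 0 \<or> (Re z = 0 \<and> Im z < 0)"
    by (auto simp: Cset_def)
next
  assume "Re z < 0 \<or> (Re z = 0 \<and> Im z < 0)"
  then have "-z \<in> Cset" by (auto simp: Cset_def)
  then show "z \<in> uminus ` Cset" by (rule rev_image_eqI) simp
qed

lemma ev_nonimag: "z \<noteq> 0 \<Longrightarrow> eventually (\<lambda>w::real. Re (cis w * z) \<noteq> 0) (at_left 0)"
proof -
  assume z: "z \<noteq> 0"
  consider "Re z > 0" | "Re z < 0" | "Re z = 0" "Im z > 0" | "Re z = 0" "Im z < 0"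
    using z complex_eq_iff by fastforce
  then show ?thesis
  proof cases
    case 1 show ?thesis using ev_pos[OF 1] by eventually_elim simp
  next
    case 2 show ?thesis using ev_neg[OF 2] by eventually_elim simp
  next
    case 3 show ?thesis using ev_imag_pos[OF 3] by eventually_elim simp
  next
    case 4 show ?thesis using ev_imag_neg[OF 4] by eventually_elim simp
  qed
qed

lemma ev_mC: "eventually (\<lambda>w::real. (cis w * z \<in> uminus ` Cset) = (z \<in> uminus ` Cset)) (at_left 0)"
proof -
  consider "z = 0" | "Re z > 0" | "Re z < 0" | "Re z = 0" "Im z > 0" | "Re z = 0" "Im z < 0"
    using complex_eq_iff by fastforce
  then show ?thesis
  proof cases
    case 1 then show ?thesis by (simp add: mC_iff)
  next
    case 2 show ?thesis using ev_pos[OF 2] by eventually_elim (use 2 in \<open>unfold mC_iff, auto simp del: times_complex.sel\<close>)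
  next
    case 3 show ?thesis using ev_neg[OF 3] by eventually_elim (use 3 in \<open>unfold mC_iff, auto simp del: times_complex.sel\<close>)
  next
    case 4 show ?thesis using ev_imag_pos[OF 4] by eventually_elim (use 4 in \<open>unfold mC_iff, auto simp del: times_complex.sel\<close>)
  next
    case 5 show ?thesis using ev_imag_neg[OF 5] by eventually_elim (use 5 in \<open>unfold mC_iff, auto simp del: times_complex.sel\<close>)
  qed
qed

lemma ev_Copen: "p \<in> Cset \<Longrightarrow> eventually (\<lambda>w::real. Re (cis w * p) > 0) (at_left 0)"
  unfolding Cset_def using ev_pos ev_imag_pos by auto

lemma Mb_simp: "Mb c (w0, a, th) = (c * w0, (\<lambda>l. c * a l), th)"
  by (simp add: Mb_def)

lemma Mb_1[simp]: "Mb 1 x = x"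
  by (cases x) (simp add: Mb_def)

lemma Mb_Mb: "Mb b (Mb c x) = Mb (b * c) x"
  by (cases x) (auto simp: Mb_def mult.assoc)

lemma DD_Mb: "c \<noteq> 0 \<Longrightarrow> x \<in> DD N \<Longrightarrow> Mb c x \<in> DD N"
  by (cases x) (auto simp: Mb_def DD_def preim_def)

lemma ev_pi: "eventually (\<lambda>w::real. piN N (Mb (cis w) x) = cis w * piN N x) (at_left 0)"
proof -
  obtain w0 a th where x: "x = (w0, a, th)" by (cases x) auto
  have "eventually (\<lambda>w::real. \<forall>l\<in>{1..N}. (cis w * a l \<in> uminus ` Cset) = (a l \<in> uminus ` Cset)) (at_left 0)"
    by (intro eventually_ball_finite) (auto intro: ev_mC)
  then show ?thesis
  proof eventually_elim
    case (elim w)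
    then have "preim N (\<lambda>l. cis w * a l) (uminus ` Cset) = preim N a (uminus ` Cset)"
      by (auto simp: preim_def)
    then show ?case
      by (simp add: x Mb_def piN_def Tr_def sum_distrib_left right_diff_distrib)
  qed
qed

lemma K: assumes "x \<in> DD N" "piN N x \<in> Cset"
  shows "eventually (\<lambda>w::real. Mb (cis w) x \<in> D N) (at_left 0)"
proof -
  obtain w0 a th where x: "x = (w0, a, th)" by (cases x) auto
  have e1: "eventually (\<lambda>w::real. \<forall>l\<in>{1..N}. a l \<noteq> 0 \<longrightarrow> Re (cis w * a l) \<noteq> 0) (at_left 0)"
  proof (intro eventually_ball_finite ballI)
    fix l assume "l \<in> {1..N}"
    show "eventually (\<lambda>w::real. a l \<noteq> 0 \<longrightarrow> Re (cis w * a l) \<noteq> 0) (at_left 0)"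
    proof (cases "a l = 0")
      case False
      show ?thesis using ev_nonimag[OF False] by eventually_elim simp
    qed simp
  qed simp
  show ?thesis
    using e1 ev_pi[of N x] ev_Copen[OF assms(2)]
  proof eventually_elim
    case (elim w)
    have "Mb (cis w) x \<in> DD N" using DD_Mb assms(1) by (simp add: cis_neq_zero)
    moreover have "piN N (Mb (cis w) x) \<in> Copen" using elim by (simp add: Copen_def)
    moreover have "\<forall>l\<in>{1..N}. fst (snd (Mb (cis w) x)) l \<notin> {z. Re z = 0} - {0}"
      using elim(1) by (auto simp: x Mb_def)
    ultimately show ?case by (simp add: D_def)
  qed
qed

lemma D_C: "y \<in> D N \<Longrightarrow> piN N y \<in> Cset"
  by (auto simp: D_def Copen_def Cset_def)

theorem lemma7:
  fixes N :: nat and \<psi> :: real and x :: triple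
  assumes "N \<ge> 1" and "-pi \<le> \<psi>" and "\<psi> \<le> pi" and "x \<in> Dtpsi N \<psi>"
  shows "\<exists>\<omega>0::real. \<omega>0 < 0 \<and>
           (\<forall>\<omega>::real. \<omega>0 \<le> \<omega> \<and> \<omega> < 0 \<longrightarrow> Mb (exp (\<i> * of_real \<omega>)) x \<in> Dpsi N \<psi>)"
proof -
  define x' where "x' = Mb (cis \<psi>) x"
  have G: "\<psi> \<noteq> 0 \<Longrightarrow> x \<in> DD N \<and> (\<forall>t::real. 0 \<le> sgn \<psi> * t \<and> sgn \<psi> * t \<le> \<bar>\<psi>\<bar> \<longrightarrow>
            piN N (Mb (cis t) x) \<in> Cset)"
    using assms(4) by (simp add: Dtpsi_def cis_conv_exp)
  have x1: "x \<in> DD N" "piN N x \<in> Cset"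
  proof -
    have "x \<in> DD N \<and> piN N x \<in> Cset"
    proof (cases "\<psi> = 0")
      case True then show ?thesis using assms(4) by (simp add: Dtpsi_def Dt_def)
    next
      case False
      from G[OF False] have "piN N (Mb (cis 0) x) \<in> Cset" "x \<in> DD N"
        using spec[of _ 0] by (auto simp del: cis_zero)
      moreover have "Mb (cis 0) x = x" by (cases x) (simp add: Mb_def)
      ultimately show ?thesis by simp
    qed
    then show "x \<in> DD N" "piN N x \<in> Cset" by auto
  qed
  have x2: "x' \<in> DD N" "piN N x' \<in> Cset"
  proof -
    show "x' \<in> DD N" unfolding x'_def using x1 DD_Mb by (simp add: cis_neq_zero)
    show "piN N x' \<in> Cset"
    proof (cases "\<psi> = 0")
      case True
      have "Mb (cis 0) x = x" by (cases x) (simp add: Mb_def)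
      then show ?thesis using x1 True by (simp add: x'_def)
    next
      case False
      from G[OF False] have "\<forall>t::real. 0 \<le> sgn \<psi> * t \<and> sgn \<psi> * t \<le> \<bar>\<psi>\<bar> \<longrightarrow>
            piN N (Mb (cis t) x) \<in> Cset" by blast
      moreover have "0 \<le> sgn \<psi> * \<psi> \<and> sgn \<psi> * \<psi> \<le> \<bar>\<psi>\<bar>" using False
        by (cases "\<psi> > 0") (auto simp: sgn_if)
      ultimately show ?thesis unfolding x'_def by blast
    qed
  qed
  have "eventually (\<lambda>w::real. Mb (cis w) x \<in> D N \<and> Mb (cis w) x' \<in> D N) (at_left 0)"
    using K[OF x1] K[OF x2] by eventually_elim auto
  then obtain b where b: "b < 0" "\<And>y. b < y \<Longrightarrow> y < 0 \<Longrightarrow> Mb (cis y) x \<in> D N \<and> Mb (cis y) x' \<in> D N"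
    by (subst (asm) eventually_at_left[of "-1"]) auto
  have "\<forall>\<omega>::real. b/2 \<le> \<omega> \<and> \<omega> < 0 \<longrightarrow> Mb (cis \<omega>) x \<in> Dpsi N \<psi>"
  proof (intro allI impI)
    fix \<omega> :: real assume om: "b/2 \<le> \<omega> \<and> \<omega> < 0"
    then have om': "b < \<omega>" "\<omega> < 0" using b by auto
    have A: "Mb (cis \<omega>) x \<in> D N" using b(2)[OF om'] by auto
    then have A': "Mb (cis \<omega>) x \<in> DD N" by (simp add: D_def)
    have "Mb (cis \<psi>) (Mb (cis \<omega>) x) = Mb (cis \<omega>) x'"
      by (simp add: x'_def Mb_Mb mult.commute)
    then have B: "Mb (cis \<psi>) (Mb (cis \<omega>) x) \<in> D N" using b(2)[OF om'] by auto
    have C: "piN N (Mb (cis t) (Mb (cis \<omega>) x)) \<in> Cset"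
      if t: "0 < sgn \<psi> * t" "sgn \<psi> * t < \<bar>\<psi>\<bar>" for t :: real
    proof -
      have e: "Mb (cis t) (Mb (cis \<omega>) x) = Mb (cis (t + \<omega>)) x"
        by (simp add: Mb_Mb cis_mult)
      have nz: "\<psi> \<noteq> 0" using t by auto
      note GG = G[OF nz]
      show ?thesis
      proof (cases "\<psi> > 0")
        case True
        then have t': "0 < t" "t < \<psi>" using t by auto
        show ?thesis
        proof (cases "t + \<omega> < 0")
          case True
          then show ?thesis unfolding e using b(2)[of "t+\<omega>"] om' t' D_C by auto
        next
          case False
          then show ?thesis unfolding e using GG \<open>\<psi> > 0\<close> t' om' by auto
        qed
      next
        case False
        then have t': "\<psi> < t" "t < 0" using t nz by (auto simp: sgn_if split: if_splits)
        have neg: "\<psi> < 0" using False nz by auto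
        show ?thesis
        proof (cases "t + \<omega> < \<psi>")
          case True
          have "Mb (cis (t + \<omega>)) x = Mb (cis (t + \<omega> - \<psi>)) x'"
            by (simp add: x'_def Mb_Mb cis_mult)
          then show ?thesis unfolding e using b(2)[of "t+\<omega>-\<psi>"] om' t' True D_C by auto
        next
          case False
          then show ?thesis unfolding e using GG neg t' om' by auto
        qed
      qed
    qed
    show "Mb (cis \<omega>) x \<in> Dpsi N \<psi>"
      unfolding Dpsi_def using A A' B C by (simp add: cis_conv_exp)
  qed
  then show ?thesis using b(1) by (intro exI[of _ "b/2"]) (simp add: cis_conv_exp)
qed

end
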